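(* Every nonempty relatively weakly open subset of the closed unit ball of Read's space $\mathcal R=(c_0,|||\cdot|||)$ has $|||\cdot|||$-diameter greater than or equal to $2/3$.
   Context: Let $c_{00}(\mathbb Q)$ be the set of finitely supported sequences with rational coefficients, and let $(u_n)_{n\in\mathbb N}$ be a sequence in $c_{00}(\mathbb Q)$ which lists every element of $c_{00}(\mathbb Q)$ infinitely many times. Let $(a_n)_{n\in\mathbb N}$ be a strictly increasing sequence of positive integers with $a_n>\max\operatorname{supp} u_n$ and $a_n>\|u_n\|_1$ for every $n$. $(e_n)$ denotes the canonical unit vectors and $\langle x,y\rangle=\sum_n x_ny_n$. Read's norm on $c_0$ is $|||x||| = \|x\|_\infty + \sum_{n} 2^{-a_n^2}|\langle x, u_n - e_{a_n}\rangle|$, and Read's space is $\mathcal R=(c_0,|||\cdot|||)$ (real scalars). *)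

theory Defs
  imports "HOL-Analysis.Analysis"
begin

text \<open>Sequences are modelled as functions nat => real; index set starts at 0.\<close>

definition c0 :: "(nat \<Rightarrow> real) set" where
  "c0 = {x. x \<longlonglongrightarrow> 0}"

definition c00Q :: "(nat \<Rightarrow> real) set" where
  "c00Q = {v. finite {k. v k \<noteq> 0} \<and> (\<forall>k. v k \<in> \<rat>)}"

definition supp :: "(nat \<Rightarrow> real) \<Rightarrow> nat set" where
  "supp v = {k. v k \<noteq> 0}"

definition l1norm :: "(nat \<Rightarrow> real) \<Rightarrow> real" where
  "l1norm v = (\<Sum>k\<in>supp v. \<bar>v k\<bar>)"

definition unitvec :: "nat \<Rightarrow> nat \<Rightarrow> real" where
  "unitvec m = (\<lambda>k. if k = m then 1 else 0)"

definition pairing :: "(nat \<Rightarrow> real) \<Rightarrow> (nat \<Rightarrow> real) \<Rightarrow> real" where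
  "pairing x y = (\<Sum>k. x k * y k)"

definition supnorm :: "(nat \<Rightarrow> real) \<Rightarrow> real" where
  "supnorm x = (SUP k. \<bar>x k\<bar>)"

definition read_params :: "(nat \<Rightarrow> nat \<Rightarrow> real) \<Rightarrow> (nat \<Rightarrow> nat) \<Rightarrow> bool" where
  "read_params u a \<longleftrightarrow>
     (\<forall>n. u n \<in> c00Q) \<and> (\<forall>v\<in>c00Q. infinite {n. u n = v}) \<and>
     strict_mono a \<and> (\<forall>n. a n > 0) \<and>
     (\<forall>n. \<forall>k\<in>supp (u n). k < a n) \<and> (\<forall>n. real (a n) > l1norm (u n))"

definition read_norm :: "(nat \<Rightarrow> nat \<Rightarrow> real) \<Rightarrow> (nat \<Rightarrow> nat) \<Rightarrow> (nat \<Rightarrow> real) \<Rightarrow> real" where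
  "read_norm u a x = supnorm x +
     (\<Sum>n. 2 powr (- real ((a n)^2)) * \<bar>pairing x (\<lambda>k. u n k - unitvec (a n) k)\<bar>)"

definition read_dual :: "(nat \<Rightarrow> nat \<Rightarrow> real) \<Rightarrow> (nat \<Rightarrow> nat) \<Rightarrow> ((nat \<Rightarrow> real) \<Rightarrow> real) set" where
  "read_dual u a = {f.
     (\<forall>x\<in>c0. \<forall>y\<in>c0. f (\<lambda>k. x k + y k) = f x + f y) \<and>
     (\<forall>c. \<forall>x\<in>c0. f (\<lambda>k. c * x k) = c * f x) \<and>
     (\<exists>C. \<forall>x\<in>c0. \<bar>f x\<bar> \<le> C * read_norm u a x)}"

definition read_weak_topology :: "(nat \<Rightarrow> nat \<Rightarrow> real) \<Rightarrow> (nat \<Rightarrow> nat) \<Rightarrow> (nat \<Rightarrow> real) topology" where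
  "read_weak_topology u a =
     topology_generated_by {{x\<in>c0. f x \<in> V} | f V. f \<in> read_dual u a \<and> open V}"

definition read_ball :: "(nat \<Rightarrow> nat \<Rightarrow> real) \<Rightarrow> (nat \<Rightarrow> nat) \<Rightarrow> (nat \<Rightarrow> real) set" where
  "read_ball u a = {x\<in>c0. read_norm u a x \<le> 1}"

definition read_diam :: "(nat \<Rightarrow> nat \<Rightarrow> real) \<Rightarrow> (nat \<Rightarrow> nat) \<Rightarrow> (nat \<Rightarrow> real) set \<Rightarrow> real" where
  "read_diam u a W = (SUP p\<in>W \<times> W. read_norm u a (\<lambda>k. fst p k - snd p k))"

end

theory Submission imports Defs begin

definition Tn :: "(nat \<Rightarrow> nat \<Rightarrow> real) \<Rightarrow> (nat \<Rightarrow> nat) \<Rightarrow> nat \<Rightarrow> (nat \<Rightarrow> real) \<Rightarrow> real" where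
  "Tn u a n x = pairing x (\<lambda>k. u n k - unitvec (a n) k)"

definition wt :: "(nat \<Rightarrow> nat) \<Rightarrow> nat \<Rightarrow> real" where
  "wt a n = 2 powr (- real ((a n)^2))"

lemma rn_eq: "read_norm u a x = supnorm x + (\<Sum>n. wt a n * \<bar>Tn u a n x\<bar>)"
  unfolding read_norm_def wt_def Tn_def by simp

lemma a_ge: assumes "read_params u a" shows "n + 1 \<le> a n"
proof (induction n)
  case 0 have "a 0 > 0" using assms unfolding read_params_def by auto
  then show ?case by simp
next
  case (Suc n)
  have "a n < a (Suc n)" using assms unfolding read_params_def strict_mono_def by auto
  then show ?case using Suc by simp
qed

lemma nat_ineq: assumes "n + 1 \<le> (m::nat)" shows "(m + 1) * 2^n \<le> (2::nat)^(m^2)"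
proof -
  have "m + 1 \<le> 2^m" using less_exp[of m] by (simp add: Suc_le_eq)
  moreover have "(2::nat)^n \<le> 2^(m - 1)" using assms by (intro power_increasing) auto
  ultimately have "(m + 1) * 2^n \<le> 2^m * 2^(m-1)" by (intro mult_mono) auto
  also have "\<dots> = 2^(m + (m - 1))" by (simp add: power_add)
  also have "\<dots> \<le> 2^(m^2)"
  proof (intro power_increasing)
    show "m + (m - 1) \<le> m^2" using assms by (cases m) (auto simp: power2_eq_square)
  qed auto
  finally show ?thesis .
qed

lemma wt_bound: assumes "read_params u a" shows "wt a n * (real (a n) + 1) \<le> (1/2)^n"
proof -
  let ?m = "a n"
  have h: "real ((?m + 1) * 2^n) \<le> real ((2::nat)^(?m^2))"
    using nat_ineq[OF a_ge[OF assms]] of_nat_le_iff by blast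
  have w: "wt a n = 1 / 2^(?m^2)"
  proof -
    have "2 powr (real (?m^2)) = 2^(?m^2)" by (rule powr_realpow) simp
    then show ?thesis unfolding wt_def by (simp add: powr_minus divide_inverse)
  qed
  have "(real ?m + 1) * 2^n \<le> 2^(?m^2)" using h by (simp add: algebra_simps)
  then show ?thesis unfolding w by (simp add: field_simps power_one_over)
qed

lemma wt_pos: "wt a n > 0" unfolding wt_def by simp


lemma supp_fin: assumes "read_params u a" shows "finite (supp (u n))"
  using assms unfolding read_params_def c00Q_def supp_def by auto

lemma supp_lt: assumes "read_params u a" "k \<in> supp (u n)" shows "k < a n"
  using assms unfolding read_params_def by auto

lemma l1_lt: assumes "read_params u a" shows "l1norm (u n) < real (a n)"
  using assms unfolding read_params_def by auto

lemma Tn_form: assumes rp: "read_params u a"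
  shows "Tn u a n x = (\<Sum>k\<in>supp (u n). x k * u n k) - x (a n)"
proof -
  have an: "a n \<notin> supp (u n)" using supp_lt[OF rp, of "a n" n] by auto
  have "Tn u a n x = (\<Sum>k\<in>insert (a n) (supp (u n)). x k * (u n k - unitvec (a n) k))"
    unfolding Tn_def pairing_def
    by (rule suminf_finite) (use supp_fin[OF rp] in \<open>auto simp: supp_def unitvec_def\<close>)
  also have "\<dots> = x (a n) * (u n (a n) - 1) + (\<Sum>k\<in>supp (u n). x k * (u n k - unitvec (a n) k))"
    using an supp_fin[OF rp] by (simp add: unitvec_def)
  also have "(\<Sum>k\<in>supp (u n). x k * (u n k - unitvec (a n) k)) = (\<Sum>k\<in>supp (u n). x k * u n k)"
    by (rule sum.cong) (use an in \<open>auto simp: unitvec_def\<close>)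
  also have "u n (a n) = 0" using an by (simp add: supp_def)
  finally show ?thesis by simp
qed

lemma Tn_lin: assumes rp: "read_params u a"
  shows "Tn u a n (\<lambda>k. s * x k + t * y k) = s * Tn u a n x + t * Tn u a n y"
  unfolding Tn_form[OF rp] by (simp add: sum.distrib sum_distrib_left algebra_simps)

lemma Tn_bound: assumes rp: "read_params u a" and M: "\<And>k. \<bar>x k\<bar> \<le> M"
  shows "\<bar>Tn u a n x\<bar> \<le> M * (real (a n) + 1)"
proof -
  have "\<bar>\<Sum>k\<in>supp (u n). x k * u n k\<bar> \<le> (\<Sum>k\<in>supp (u n). \<bar>x k * u n k\<bar>)" by (rule sum_abs)
  also have "\<dots> \<le> (\<Sum>k\<in>supp (u n). M * \<bar>u n k\<bar>)"
    by (rule sum_mono) (simp add: abs_mult M mult_right_mono)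
  also have "\<dots> = M * l1norm (u n)" unfolding l1norm_def by (simp add: sum_distrib_left)
  also have "\<dots> \<le> M * real (a n)"
    using l1_lt[OF rp, of n] M[of 0] by (intro mult_left_mono) auto
  finally have "\<bar>\<Sum>k\<in>supp (u n). x k * u n k\<bar> \<le> M * real (a n)" .
  then show ?thesis unfolding Tn_form[OF rp] using M[of "a n"] by (simp add: algebra_simps)
qed

lemma Tn_unit: assumes rp: "read_params u a" and "a n < k"
  shows "Tn u a n (unitvec k) = 0"
proof -
  have "k \<notin> supp (u n)" using supp_lt[OF rp, of k n] assms(2) by auto
  then have "u n k = 0" by (simp add: supp_def)
  then show ?thesis unfolding Tn_form[OF rp] using assms(2)
    by (auto simp: unitvec_def intro!: sum.neutral)
qed

lemma sup_upper: assumes M: "\<And>k. \<bar>x k\<bar> \<le> M" shows "\<bar>x k\<bar> \<le> supnorm x"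
  unfolding supnorm_def by (rule cSUP_upper) (use M in \<open>auto intro!: bdd_aboveI[of _ M]\<close>)

lemma sup_least: assumes M: "\<And>k. \<bar>x k\<bar> \<le> M" shows "supnorm x \<le> M"
  unfolding supnorm_def by (rule cSUP_least) (use M in auto)

lemma S_summable: assumes rp: "read_params u a" and M: "\<And>k. \<bar>x k\<bar> \<le> M"
  shows "summable (\<lambda>n. wt a n * \<bar>Tn u a n x\<bar>)"
    and "(\<Sum>n. wt a n * \<bar>Tn u a n x\<bar>) \<le> 2 * M"
proof -
  have M0: "M \<ge> 0" using M[of 0] by auto
  have b: "wt a n * \<bar>Tn u a n x\<bar> \<le> M * (1/2)^n" for n
  proof -
    have "wt a n * \<bar>Tn u a n x\<bar> \<le> wt a n * (M * (real (a n) + 1))"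
      using Tn_bound[OF rp M] wt_pos[of a n] by (intro mult_left_mono) auto
    also have "\<dots> = M * (wt a n * (real (a n) + 1))" by simp
    also have "\<dots> \<le> M * (1/2)^n" using wt_bound[OF rp] M0 by (intro mult_left_mono) auto
    finally show ?thesis .
  qed
  have g: "summable (\<lambda>n. M * (1/2::real)^n)" by (intro summable_mult summable_geometric) simp
  show s: "summable (\<lambda>n. wt a n * \<bar>Tn u a n x\<bar>)"
    by (rule summable_comparison_test'[OF g]) (use b wt_pos[of a] in \<open>auto simp: abs_mult abs_of_pos\<close>)
  have "(\<Sum>n. wt a n * \<bar>Tn u a n x\<bar>) \<le> (\<Sum>n. M * (1/2::real)^n)" by (rule suminf_le[OF b s g])
  also have "\<dots> = 2 * M" using suminf_geometric[of "1/2::real"] by (simp add: suminf_mult)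
  finally show "(\<Sum>n. wt a n * \<bar>Tn u a n x\<bar>) \<le> 2 * M" .
qed

lemma S_nonneg: assumes rp: "read_params u a" and M: "\<And>k. \<bar>x k\<bar> \<le> M"
  shows "(\<Sum>n. wt a n * \<bar>Tn u a n x\<bar>) \<ge> 0"
  by (rule suminf_nonneg[OF S_summable(1)[OF rp M]]) (simp add: wt_pos less_imp_le)

lemma rn_upper: assumes rp: "read_params u a" and M: "\<And>k. \<bar>x k\<bar> \<le> M"
  shows "read_norm u a x \<le> 3 * M"
  unfolding rn_eq using sup_least[of x M] S_summable(2)[OF rp, of x M] M by fastforce

lemma rn_lower: assumes rp: "read_params u a" and M: "\<And>k. \<bar>x k\<bar> \<le> M"
  shows "\<bar>x j\<bar> \<le> read_norm u a x"
  unfolding rn_eq using sup_upper[of x M j] S_nonneg[OF rp, of x M] M by fastforce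

lemma c0_bdd: assumes "x \<in> c0" shows "\<exists>M. \<forall>k. \<bar>x k\<bar> \<le> M"
proof -
  have "Bseq x" using assms unfolding c0_def by (auto intro: convergent_imp_Bseq convergentI)
  then obtain K where "\<forall>k. norm (x k) \<le> K" unfolding Bseq_def by auto
  then show ?thesis by auto
qed


lemma weak_nbhd:
  assumes "openin (read_weak_topology u a) U" "x0 \<in> U"
  shows "\<exists>F \<epsilon>. finite F \<and> F \<subseteq> read_dual u a \<and> \<epsilon> > 0 \<and>
           (\<forall>z\<in>c0. (\<forall>f\<in>F. \<bar>f z - f x0\<bar> < \<epsilon>) \<longrightarrow> z \<in> U)"
proof -
  have g: "generate_topology_on {{x\<in>c0. f x \<in> V} | f V. f \<in> read_dual u a \<and> open V} U"
    using assms(1) unfolding read_weak_topology_def openin_topology_generated_by_iff .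
  from g assms(2) show ?thesis
  proof (induction arbitrary: x0)
    case Empty then show ?case by simp
  next
    case (Int A B)
    obtain F1 e1 where 1: "finite F1" "F1 \<subseteq> read_dual u a" "e1 > 0"
      "\<forall>z\<in>c0. (\<forall>f\<in>F1. \<bar>f z - f x0\<bar> < e1) \<longrightarrow> z \<in> A" using Int.IH(1)[of x0] Int.prems by auto
    obtain F2 e2 where 2: "finite F2" "F2 \<subseteq> read_dual u a" "e2 > 0"
      "\<forall>z\<in>c0. (\<forall>f\<in>F2. \<bar>f z - f x0\<bar> < e2) \<longrightarrow> z \<in> B" using Int.IH(2)[of x0] Int.prems by auto
    show ?case
      by (rule exI[of _ "F1 \<union> F2"], rule exI[of _ "min e1 e2"]) (use 1 2 in auto)
  next
    case (UN K)
    then obtain k where "k \<in> K" "x0 \<in> k" by auto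
    with UN obtain F e where "finite F" "F \<subseteq> read_dual u a" "e > 0"
      "\<forall>z\<in>c0. (\<forall>f\<in>F. \<bar>f z - f x0\<bar> < e) \<longrightarrow> z \<in> k" by meson
    then show ?case using \<open>k \<in> K\<close> by blast
  next
    case (Basis s)
    then obtain f V where fV: "s = {x\<in>c0. f x \<in> V}" "f \<in> read_dual u a" "open V" by auto
    then have "f x0 \<in> V" using Basis by auto
    then obtain e where e: "e > 0" "ball (f x0) e \<subseteq> V" using fV(3) open_contains_ball by blast
    show ?case
    proof (rule exI[of _ "{f}"], rule exI[of _ e], intro conjI ballI impI)
      fix z assume "z \<in> c0" "\<forall>g\<in>{f}. \<bar>g z - g x0\<bar> < e"
      then have "f z \<in> ball (f x0) e" by (simp add: dist_real_def abs_minus_commute)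
      then show "z \<in> s" using e fV \<open>z \<in> c0\<close> by auto
    qed (use fV e in auto)
  qed
qed


lemma uv: "unitvec m j = (if j = m then 1 else 0)" by (simp add: unitvec_def)

lemma ev_zero_c0: assumes "\<And>j. j \<ge> N \<Longrightarrow> x j = 0" shows "x \<in> c0"
  unfolding c0_def mem_Collect_eq
  by (rule tendsto_eventually) (use assms in \<open>auto simp: eventually_sequentially\<close>)

lemma unit_c0: "unitvec k \<in> c0"
  by (rule ev_zero_c0[of "Suc k"]) (simp add: unitvec_def)

lemma c0_lin: assumes "x \<in> c0" "y \<in> c0" shows "(\<lambda>k. s * x k + t * y k) \<in> c0"
  using assms unfolding c0_def
  by (auto intro!: tendsto_add_zero tendsto_mult_right_zero)

lemma dual_lin: assumes "f \<in> read_dual u a" "x \<in> c0" "y \<in> c0"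
  shows "f (\<lambda>k. s * x k + t * y k) = s * f x + t * f y"
proof -
  have xs: "(\<lambda>k. s * x k) \<in> c0" and yt: "(\<lambda>k. t * y k) \<in> c0"
    using c0_lin[OF assms(2) assms(3), of _ 0] c0_lin[OF assms(2) assms(3), of 0] by auto
  have "f (\<lambda>k. s * x k + t * y k) = f (\<lambda>k. s * x k) + f (\<lambda>k. t * y k)"
  proof -
    have "\<forall>x\<in>c0. \<forall>y\<in>c0. f (\<lambda>k. x k + y k) = f x + f y" using assms(1) by (simp add: read_dual_def)
    from bspec[OF bspec[OF this xs] yt] show ?thesis by simp
  qed
  also have "\<dots> = s * f x + t * f y" using assms unfolding read_dual_def by auto
  finally show ?thesis .
qed

lemma dual_unit_tendsto: assumes rp: "read_params u a" and f: "f \<in> read_dual u a"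
  shows "(\<lambda>k. f (unitvec k)) \<longlonglongrightarrow> 0"
proof -
  obtain C where C: "\<forall>x\<in>c0. \<bar>f x\<bar> \<le> C * read_norm u a x" using f unfolding read_dual_def by auto
  define X where "X n = (\<lambda>j. if j < n then sgn (f (unitvec j)) else 0)" for n
  have Xc0: "X n \<in> c0" for n by (rule ev_zero_c0[of n]) (simp add: X_def)
  have Xb: "\<bar>X n j\<bar> \<le> 1" for n j by (simp add: X_def sgn_real_def)
  have fX: "f (X n) = (\<Sum>k<n. \<bar>f (unitvec k)\<bar>)" for n
  proof (induction n)
    case 0
    have "X 0 = (\<lambda>j. 0 * unitvec 0 j + 0 * unitvec 0 j)" by (simp add: X_def)
    then show ?case using dual_lin[OF f unit_c0 unit_c0, of 0 0 0] by simp
  next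
    case (Suc n)
    have "X (Suc n) = (\<lambda>j. 1 * X n j + sgn (f (unitvec n)) * unitvec n j)"
      by (rule ext) (simp add: X_def uv less_Suc_eq)
    then have "f (X (Suc n)) = f (X n) + sgn (f (unitvec n)) * f (unitvec n)"
      using dual_lin[OF f Xc0 unit_c0, of 1 n "sgn (f (unitvec n))" n] by simp
    then show ?case using Suc by (simp add: sgn_real_def abs_if)
  qed
  have bd: "(\<Sum>k<n. \<bar>f (unitvec k)\<bar>) \<le> \<bar>C\<bar> * 3" for n
  proof -
    have "(\<Sum>k<n. \<bar>f (unitvec k)\<bar>) \<le> \<bar>f (X n)\<bar>" using fX by simp
    also have "\<dots> \<le> C * read_norm u a (X n)" using C Xc0 by auto
    also have "\<dots> \<le> \<bar>C\<bar> * read_norm u a (X n)"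
      using rn_lower[OF rp, of "X n" 1 0] Xb by (intro mult_right_mono) auto
    also have "\<dots> \<le> \<bar>C\<bar> * 3" using rn_upper[OF rp, of "X n" 1] Xb by (intro mult_left_mono) auto
    finally show ?thesis .
  qed
  have "summable (\<lambda>k. \<bar>f (unitvec k)\<bar>)"
    by (rule bounded_imp_summable[where B="\<bar>C\<bar> * 3"]) (use bd in \<open>simp_all only: lessThan_Suc_atMost[symmetric] abs_ge_zero\<close>)
  then have "(\<lambda>k. \<bar>f (unitvec k)\<bar>) \<longlonglongrightarrow> 0" by (rule summable_LIMSEQ_zero)
  then show ?thesis by (simp add: tendsto_rabs_zero_iff)
qed


lemma tail_bound: assumes rp: "read_params u a" and k: "a N0 \<le> k"
  shows "(\<Sum>n. wt a n * \<bar>Tn u a n (unitvec k)\<bar>) \<le> 2 * (1/2)^N0"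
proof -
  define g where "g n = wt a n * \<bar>Tn u a n (unitvec k)\<bar>" for n
  have ub: "\<bar>unitvec k j\<bar> \<le> 1" for j by (simp add: uv)
  have sg: "summable g" unfolding g_def using S_summable(1)[OF rp, of "unitvec k" 1] ub by simp
  have gb: "g n \<le> (1/2)^n" for n
  proof -
    have "g n \<le> wt a n * (1 * (real (a n) + 1))"
      unfolding g_def using Tn_bound[OF rp, of "unitvec k" 1 n] ub wt_pos[of a n]
      by (intro mult_left_mono) auto
    then show ?thesis using wt_bound[OF rp, of n] by simp
  qed
  have g0: "g i = 0" if "i < N0" for i
  proof -
    have "a i < a N0" using rp that unfolding read_params_def strict_mono_def by auto
    then show ?thesis unfolding g_def using Tn_unit[OF rp, of i k] k by simp
  qed
  have "suminf g = (\<Sum>n. g (n + N0)) + (\<Sum>i<N0. g i)" by (rule suminf_split_initial_segment[OF sg])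
  also have "(\<Sum>i<N0. g i) = 0" using g0 by simp
  also have "(\<Sum>n. g (n + N0)) \<le> (\<Sum>n. (1/2)^N0 * (1/2::real)^n)"
  proof (rule suminf_le)
    show "g (n + N0) \<le> (1/2)^N0 * (1/2)^n" for n using gb[of "n + N0"] by (simp add: power_add mult.commute)
    show "summable (\<lambda>n. g (n + N0))" using sg by (rule summable_ignore_initial_segment)
    show "summable (\<lambda>n. (1/2)^N0 * (1/2::real)^n)" by (intro summable_mult summable_geometric) simp
  qed
  also have "\<dots> = 2 * (1/2)^N0" using suminf_geometric[of "1/2::real"] by (simp add: suminf_mult)
  finally show ?thesis unfolding g_def by simp
qed


lemma construct:
  assumes rp: "read_params u a" and x0: "x0 \<in> c0" "read_norm u a x0 \<le> 1"
    and F: "finite F" "F \<subseteq> read_dual u a" and ep: "\<epsilon> > 0"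
    and hU: "\<forall>z\<in>c0. (\<forall>f\<in>F. \<bar>f z - f x0\<bar> < \<epsilon>) \<longrightarrow> z \<in> U"
    and be: "0 < \<beta>" "\<beta> \<le> 1/6" "\<forall>f\<in>F. \<beta> * \<bar>f x0\<bar> < \<epsilon>/2"
  shows "\<exists>z1 z2. z1 \<in> U \<inter> read_ball u a \<and> z2 \<in> U \<inter> read_ball u a \<and>
            read_norm u a (\<lambda>j. z1 j - z2 j) \<ge> 2/3 - 2 * \<beta>"
proof -
  obtain M0 where M0: "\<And>j. \<bar>x0 j\<bar> \<le> M0" using c0_bdd[OF x0(1)] by auto
  define sup0 where "sup0 = supnorm x0"
  define S0 where "S0 = (\<Sum>n. wt a n * \<bar>Tn u a n x0\<bar>)"
  have xs: "\<bar>x0 j\<bar> \<le> sup0" for j unfolding sup0_def using sup_upper[of x0 M0 j] M0 by blast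
  have S0b: "S0 \<le> 2 * sup0" unfolding S0_def using S_summable(2)[OF rp, of x0 sup0] xs by blast
  have S0n: "S0 \<ge> 0" unfolding S0_def using S_nonneg[OF rp, of x0 M0] M0 by blast
  have ss0: "summable (\<lambda>n. wt a n * \<bar>Tn u a n x0\<bar>)" using S_summable(1)[OF rp, of x0 M0] M0 by blast
  have sum1: "sup0 + S0 \<le> 1" using x0(2) unfolding rn_eq sup0_def S0_def .
  have sup0n: "sup0 \<ge> 0" using xs[of 0] by auto
  have S023: "S0 \<le> 2/3" using S0b sum1 by linarith
  have "eventually (\<lambda>n. (1/2::real)^n < \<beta>/4) sequentially"
    by (rule order_tendstoD(2)[OF LIMSEQ_power_zero[of "1/2::real"]]) (use be(1) in auto)
  then obtain N0 where N0: "(1/2::real)^N0 < \<beta>/4" by (auto simp: eventually_sequentially)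
  have ev1: "eventually (\<lambda>k. \<forall>f\<in>F. \<bar>f (unitvec k)\<bar> < \<epsilon>/2) sequentially"
  proof (rule eventually_ball_finite[OF F(1)], rule ballI)
    fix f assume "f \<in> F"
    then have "(\<lambda>k. f (unitvec k)) \<longlonglongrightarrow> 0" using dual_unit_tendsto[OF rp] F(2) by auto
    then have "(\<lambda>k. \<bar>f (unitvec k)\<bar>) \<longlonglongrightarrow> 0" by (simp add: tendsto_rabs_zero_iff)
    then show "eventually (\<lambda>k. \<bar>f (unitvec k)\<bar> < \<epsilon>/2) sequentially"
      by (rule order_tendstoD(2)) (use ep in auto)
  qed
  have ev2: "eventually (\<lambda>k. \<bar>x0 k\<bar> < \<beta>/2) sequentially"
  proof -
    have "(\<lambda>k. \<bar>x0 k\<bar>) \<longlonglongrightarrow> 0" using x0(1) unfolding c0_def by (simp add: tendsto_rabs_zero_iff)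
    then show ?thesis by (rule order_tendstoD(2)) (use be(1) in auto)
  qed
  have ev3: "eventually (\<lambda>k. a N0 \<le> k) sequentially" by (rule eventually_ge_at_top)
  from eventually_conj[OF ev1 eventually_conj[OF ev2 ev3]] obtain k where
    kf: "\<forall>f\<in>F. \<bar>f (unitvec k)\<bar> < \<epsilon>/2" and kx: "\<bar>x0 k\<bar> < \<beta>/2" and kN: "a N0 \<le> k"
    by (auto simp: eventually_sequentially)
  define s where "s = 1 - \<beta>"
  define t where "t = 1 - S0 - \<beta>"
  have t0: "t \<ge> 0" and t1: "t \<le> 1" and s0: "s \<ge> 0" and s1: "s \<le> 1"
    using S023 S0n be(1) be(2) unfolding t_def s_def by linarith+
  have tail: "(\<Sum>n. wt a n * \<bar>Tn u a n (unitvec k)\<bar>) \<le> \<beta>/2"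
    using tail_bound[OF rp kN] N0 by linarith
  have ssk: "summable (\<lambda>n. wt a n * \<bar>Tn u a n (unitvec k)\<bar>)"
    using S_summable(1)[OF rp, of "unitvec k" 1] by (simp add: uv)
  define z where "z c = (\<lambda>j. s * x0 j + c * unitvec k j)" for c
  have good: "z c \<in> U \<inter> read_ball u a" if c: "\<bar>c\<bar> \<le> t" for c
  proof -
    have zc0: "z c \<in> c0" unfolding z_def by (rule c0_lin[OF x0(1) unit_c0])
    define Mz where "Mz = max (s * sup0) (\<beta>/2 + t)"
    have zb: "\<bar>z c j\<bar> \<le> Mz" for j
    proof (cases "j = k")
      case True
      have "\<bar>z c j\<bar> = \<bar>s * x0 k + c\<bar>" unfolding z_def using True by (simp add: uv)
      also have "\<dots> \<le> \<bar>s * x0 k\<bar> + \<bar>c\<bar>" by (rule abs_triangle_ineq)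
      also have "\<dots> = s * \<bar>x0 k\<bar> + \<bar>c\<bar>" using s0 by (simp add: abs_mult)
      also have "\<dots> \<le> 1 * (\<beta>/2) + t" using kx s0 s1 c by (intro add_mono mult_mono) auto
      finally show ?thesis unfolding Mz_def by simp
    next
      case False
      have "\<bar>z c j\<bar> = s * \<bar>x0 j\<bar>" unfolding z_def using False s0 by (simp add: uv abs_mult)
      also have "\<dots> \<le> s * sup0" using xs s0 by (intro mult_left_mono) auto
      finally show ?thesis unfolding Mz_def by simp
    qed
    have supz: "supnorm (z c) \<le> Mz" using sup_least[of "z c" Mz] zb by blast
    have ssz: "summable (\<lambda>n. wt a n * \<bar>Tn u a n (z c)\<bar>)" using S_summable(1)[OF rp, of "z c" Mz] zb by blast
    have termb: "wt a n * \<bar>Tn u a n (z c)\<bar> \<le> s * (wt a n * \<bar>Tn u a n x0\<bar>) + t * (wt a n * \<bar>Tn u a n (unitvec k)\<bar>)" for n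
    proof -
      have "\<bar>Tn u a n (z c)\<bar> = \<bar>s * Tn u a n x0 + c * Tn u a n (unitvec k)\<bar>"
        unfolding z_def Tn_lin[OF rp] ..
      also have "\<dots> \<le> s * \<bar>Tn u a n x0\<bar> + t * \<bar>Tn u a n (unitvec k)\<bar>"
      proof -
        have "\<bar>c * Tn u a n (unitvec k)\<bar> \<le> t * \<bar>Tn u a n (unitvec k)\<bar>"
          using c by (simp add: abs_mult mult_right_mono)
        moreover have "\<bar>s * Tn u a n x0 + c * Tn u a n (unitvec k)\<bar> \<le> \<bar>s * Tn u a n x0\<bar> + \<bar>c * Tn u a n (unitvec k)\<bar>"
          by (rule abs_triangle_ineq)
        moreover have "\<bar>s * Tn u a n x0\<bar> = s * \<bar>Tn u a n x0\<bar>" using s0 by (simp add: abs_mult)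
        ultimately show ?thesis by linarith
      qed
      finally have "wt a n * \<bar>Tn u a n (z c)\<bar> \<le> wt a n * (s * \<bar>Tn u a n x0\<bar> + t * \<bar>Tn u a n (unitvec k)\<bar>)"
        using wt_pos[of a n] by (intro mult_left_mono) auto
      then show ?thesis by (simp add: algebra_simps)
    qed
    have Sz: "(\<Sum>n. wt a n * \<bar>Tn u a n (z c)\<bar>) \<le> s * S0 + t * (\<beta>/2)"
    proof -
      have "(\<Sum>n. wt a n * \<bar>Tn u a n (z c)\<bar>) \<le>
            (\<Sum>n. s * (wt a n * \<bar>Tn u a n x0\<bar>) + t * (wt a n * \<bar>Tn u a n (unitvec k)\<bar>))"
        by (rule suminf_le[OF termb ssz]) (intro summable_add summable_mult ss0 ssk)
      also have "\<dots> = s * S0 + t * (\<Sum>n. wt a n * \<bar>Tn u a n (unitvec k)\<bar>)"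
        unfolding S0_def using ss0 ssk
        by (subst suminf_add[symmetric]) (auto intro!: summable_mult simp: suminf_mult)
      also have "\<dots> \<le> s * S0 + t * (\<beta>/2)" using tail t0 by (intro add_left_mono mult_left_mono)
      finally show ?thesis .
    qed
    have rz: "read_norm u a (z c) \<le> Mz + s * S0 + t * (\<beta>/2)" unfolding rn_eq using supz Sz by linarith
    have h1: "t * (\<beta>/2) \<le> 1 * (\<beta>/2)" using t1 be by (intro mult_right_mono) auto
    have h2: "s * sup0 + s * S0 \<le> s" using sum1 s0
      by (metis distrib_left mult.right_neutral mult_left_mono)
    have h3: "s * S0 \<le> S0" using mult_right_mono[OF s1 S0n] by simp
    have se: "s = 1 - \<beta>" and te: "t = 1 - S0 - \<beta>" unfolding s_def t_def by simp_all
    have "Mz \<le> 1 - (s * S0 + t * (\<beta>/2))" unfolding Mz_def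
    proof (rule max.boundedI)
      show "s * sup0 \<le> 1 - (s * S0 + t * (\<beta>/2))" using h1 h2 se be(1) by linarith
      show "\<beta>/2 + t \<le> 1 - (s * S0 + t * (\<beta>/2))" using h1 h3 te be(1) by linarith
    qed
    then have "read_norm u a (z c) \<le> 1" using rz by linarith
    then have ball: "z c \<in> read_ball u a" using zc0 unfolding read_ball_def by auto
    have "\<forall>f\<in>F. \<bar>f (z c) - f x0\<bar> < \<epsilon>"
    proof
      fix f assume fF: "f \<in> F"
      then have fd: "f \<in> read_dual u a" using F(2) by auto
      have "f (z c) = s * f x0 + c * f (unitvec k)" unfolding z_def by (rule dual_lin[OF fd x0(1) unit_c0])
      then have "\<bar>f (z c) - f x0\<bar> = \<bar>(-\<beta>) * f x0 + c * f (unitvec k)\<bar>" unfolding s_def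
        by (simp add: algebra_simps)
      also have "\<dots> \<le> \<bar>(-\<beta>) * f x0\<bar> + \<bar>c * f (unitvec k)\<bar>" by (rule abs_triangle_ineq)
      also have "\<dots> = \<beta> * \<bar>f x0\<bar> + \<bar>c\<bar> * \<bar>f (unitvec k)\<bar>"
        using be(1) by (simp add: abs_mult)
      also have "\<bar>c\<bar> * \<bar>f (unitvec k)\<bar> \<le> 1 * \<bar>f (unitvec k)\<bar>"
        using c t1 by (intro mult_right_mono) auto
      finally show "\<bar>f (z c) - f x0\<bar> < \<epsilon>" using kf fF be(3) by fastforce
    qed
    then have "z c \<in> U" using hU zc0 by blast
    then show ?thesis using ball by blast
  qed
  have d: "(\<lambda>j. z t j - z (-t) j) = (\<lambda>j. (2 * t) * unitvec k j)" unfolding z_def by (auto simp: algebra_simps)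
  have "\<bar>(2 * t) * unitvec k k\<bar> \<le> read_norm u a (\<lambda>j. (2 * t) * unitvec k j)"
    by (rule rn_lower[OF rp, of _ "2 * t"]) (use t0 in \<open>simp add: uv abs_mult\<close>)
  then have "read_norm u a (\<lambda>j. z t j - z (-t) j) \<ge> 2 * t" unfolding d using t0 by (simp add: uv)
  moreover have "2 * t \<ge> 2/3 - 2 * \<beta>" unfolding t_def using S023 by (simp add: algebra_simps)
  ultimately show ?thesis using good[of t] good[of "-t"] t0 by force
qed


theorem corollary2p8:
  fixes u :: "nat \<Rightarrow> nat \<Rightarrow> real" and a :: "nat \<Rightarrow> nat" and W :: "(nat \<Rightarrow> real) set"
  assumes "read_params u a"
    and "W \<noteq> {}"
    and "openin (subtopology (read_weak_topology u a) (read_ball u a)) W"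
  shows "read_diam u a W \<ge> 2/3"
proof -
  note rp = assms(1)
  obtain U where U: "openin (read_weak_topology u a) U" "W = U \<inter> read_ball u a"
    using assms(3) unfolding openin_subtopology by auto
  obtain x0 where x0W: "x0 \<in> W" using assms(2) by auto
  then have x0: "x0 \<in> c0" "read_norm u a x0 \<le> 1" "x0 \<in> U" using U unfolding read_ball_def by auto
  obtain F \<epsilon> where F: "finite F" "F \<subseteq> read_dual u a" "\<epsilon> > 0"
    "\<forall>z\<in>c0. (\<forall>f\<in>F. \<bar>f z - f x0\<bar> < \<epsilon>) \<longrightarrow> z \<in> U"
    using weak_nbhd[OF U(1) x0(3)] by blast
  define g where "g p = read_norm u a (\<lambda>k. fst p k - snd p k)" for p :: "(nat \<Rightarrow> real) \<times> (nat \<Rightarrow> real)"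
  have inball: "\<bar>x j\<bar> \<le> 1" if "x \<in> W" for x j
  proof -
    have "x \<in> c0" "read_norm u a x \<le> 1" using that U unfolding read_ball_def by auto
    moreover obtain M where M: "\<And>j. \<bar>x j\<bar> \<le> M" using c0_bdd[OF \<open>x \<in> c0\<close>] by auto
    ultimately show ?thesis using rn_lower[OF rp, of x M j, OF M] by linarith
  qed
  have bdd: "bdd_above (g ` (W \<times> W))"
  proof (rule bdd_aboveI[of _ 6])
    fix r assume "r \<in> g ` (W \<times> W)"
    then obtain x y where xy: "x \<in> W" "y \<in> W" "r = g (x, y)" by auto
    have "\<bar>x j - y j\<bar> \<le> 2" for j using inball[OF xy(1), of j] inball[OF xy(2), of j] by linarith
    then have "read_norm u a (\<lambda>j. x j - y j) \<le> 3 * 2" by (rule rn_upper[OF rp])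
    then show "r \<le> 6" using xy unfolding g_def by simp
  qed
  define B where "B = (\<Sum>f\<in>F. \<bar>f x0\<bar>)"
  have B0: "B \<ge> 0" unfolding B_def by (simp add: sum_nonneg)
  show ?thesis unfolding read_diam_def g_def[symmetric]
  proof (rule field_le_epsilon)
    fix e :: real assume e: "e > 0"
    define \<beta> where "\<beta> = min (1/6) (min (e/2) (\<epsilon> / (4 * (B + 1))))"
    have be1: "0 < \<beta>" unfolding \<beta>_def using e F(3) B0 by auto
    have be2: "\<beta> \<le> 1/6" unfolding \<beta>_def by (rule min.cobounded1)
    have be3: "\<beta> \<le> e/2" unfolding \<beta>_def by (rule order_trans[OF min.cobounded2 min.cobounded1])
    have be4: "\<beta> \<le> \<epsilon> / (4 * (B + 1))" unfolding \<beta>_def by (rule order_trans[OF min.cobounded2 min.cobounded2])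
    note be = be1 be2 be3 be4
    have "\<forall>f\<in>F. \<beta> * \<bar>f x0\<bar> < \<epsilon>/2"
    proof
      fix f assume "f \<in> F"
      then have "\<bar>f x0\<bar> \<le> B" unfolding B_def using F(1) by (intro member_le_sum) auto
      then have "\<beta> * \<bar>f x0\<bar> \<le> \<beta> * (B + 1)" using be(1) by (intro mult_left_mono) auto
      also have "\<dots> \<le> \<epsilon> / (4 * (B + 1)) * (B + 1)" using be(4) B0 by (intro mult_right_mono) auto
      also have "\<dots> = \<epsilon> / 4" using B0 by (simp add: field_simps)
      finally show "\<beta> * \<bar>f x0\<bar> < \<epsilon>/2" using F(3) by linarith
    qed
    then obtain z1 z2 where z: "z1 \<in> U \<inter> read_ball u a" "z2 \<in> U \<inter> read_ball u a"
      "read_norm u a (\<lambda>j. z1 j - z2 j) \<ge> 2/3 - 2 * \<beta>"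
      using construct[OF rp x0(1) x0(2) F(1) F(2) F(3) F(4) be(1) be(2)] by blast
    have "(z1, z2) \<in> W \<times> W" using z U by auto
    then have "g (z1, z2) \<le> (SUP p\<in>W \<times> W. g p)" by (rule cSUP_upper[OF _ bdd])
    then show "2/3 \<le> (SUP p\<in>W \<times> W. g p) + e" using z(3) be(3) unfolding g_def by simp
  qed
qed

end
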